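(* Let $$A=\bigoplus_{i\in I}B(H_{\mathrm{in},i}),\quad B=\bigoplus_{j\in J}B(H_{\mathrm{out},j}),\quad C=\bigoplus_{k\in K}B(K_{\mathrm{in},k}),\quad D=\bigoplus_{l\in L}B(K_{\mathrm{out},l}),$$ and let $\mathcal S:\underline{\mathrm{Hom}}(A,B)\to\underline{\mathrm{Hom}}(C,D)$ be a deterministic supermap. Then there exists a unital completely positive map $\mathcal N:A\to C$ such that, for every positive $X\in\underline{\mathrm{Hom}}(A,B)$, $$\mathrm{Tr}_{\mathrm{out}}\big[\mathcal S(X)\big]=\mathcal N\big(\mathrm{Tr}_{\mathrm{out}}[X]\big).$$ Explicitly: - on the right, $\mathrm{Tr}_{\mathrm{out}}[X]=\big(\sum_{j\in J}\mathrm{Tr}_{H_{\mathrm{out},j}}X_{ji}\big)_{i\in I}\in A$; - on the left, $\mathrm{Tr}_{\mathrm{out}}[\mathcal S(X)]=\big(\sum_{l\in L}\mathrm{Tr}_{K_{\mathrm{out},l}}\mathcal S(X)_{lk}\big)_{k\in K}\in C$.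
   Context: Throughout, all Hilbert spaces are finite-dimensional and nonzero, and all index sets are finite and nonempty. **Multimatrix algebras.** A finite-dimensional $C^*$-algebra is written as $A=\bigoplus_{i\in I}B(H_i)$, with elements $X=(X_i)_{i\in I}$. Its trace is $\mathrm{Tr}(X)=\sum_i\mathrm{Tr}(X_i)$, and $X\ge 0$ means every block is positive semidefinite. **The algebra $\underline{\mathrm{Hom}}$ and (TP).** For $A=\bigoplus_{i\in I}B(H_i)$ and $B=\bigoplus_{j\in J}B(K_j)$, set $$\underline{\mathrm{Hom}}(A,B):=\bigoplus_{(j,i)\in J\times I}B(K_j\otimes H_i).$$ An element $X\in\underline{\mathrm{Hom}}(A,B)$ satisfies **(TP)** if $\sum_{j\in J}\mathrm{Tr}_{K_j}(X_{ji})=1_{H_i}$ for every $i\in I$. These positive (TP) elements are exactly the Choi operators of the channels (CPTP maps) $A\to B$. **Partial trace.** For $X\in\underline{\mathrm{Hom}}(A,B)$, define the partial trace over the output as $\mathrm{Tr}_{\mathrm{out}}[X]:=\big(\sum_{j}\mathrm{Tr}_{K_j}X_{ji}\big)_{i\in I}\in A$. **Deterministic supermaps.** A deterministic supermap is a completely positive linear map $\mathcal S:\underline{\mathrm{Hom}}(A,B)\to\underline{\mathrm{Hom}}(C,D)$ sending every positive element satisfying (TP) to an element satisfying (TP). *)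

theory Defs
  imports Complex_Main "Jordan_Normal_Form.Matrix"
begin

text \<open>A multimatrix algebra (+) over i in I of B(C^(d i)) is described by a finite nonempty
  index set I and a dimension function d (all d i > 0). An element is a family of
  complex matrices X i of size d i x d i, extended by the empty matrix outside I.\<close>

definition mm_carrier :: "'i set \<Rightarrow> ('i \<Rightarrow> nat) \<Rightarrow> ('i \<Rightarrow> complex mat) set" where
  "mm_carrier I d = {X. (\<forall>i\<in>I. X i \<in> carrier_mat (d i) (d i)) \<and> (\<forall>i. i \<notin> I \<longrightarrow> X i = 0\<^sub>m 0 0)}"

definition valid_mm :: "'i set \<Rightarrow> ('i \<Rightarrow> nat) \<Rightarrow> bool" where
  "valid_mm I d \<longleftrightarrow> finite I \<and> I \<noteq> {} \<and> (\<forall>i\<in>I. d i > 0)"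

definition psd_mat :: "nat \<Rightarrow> complex mat \<Rightarrow> bool" where
  "psd_mat n M \<longleftrightarrow> M \<in> carrier_mat n n \<and>
     (\<forall>v \<in> carrier_vec n. Im (scalar_prod (conjugate v) (mult_mat_vec M v)) = 0
                           \<and> Re (scalar_prod (conjugate v) (mult_mat_vec M v)) \<ge> 0)"

definition mm_pos :: "'i set \<Rightarrow> ('i \<Rightarrow> nat) \<Rightarrow> ('i \<Rightarrow> complex mat) \<Rightarrow> bool" where
  "mm_pos I d X \<longleftrightarrow> X \<in> mm_carrier I d \<and> (\<forall>i\<in>I. psd_mat (d i) (X i))"

definition mm_one :: "'i set \<Rightarrow> ('i \<Rightarrow> nat) \<Rightarrow> ('i \<Rightarrow> complex mat)" where
  "mm_one I d = (\<lambda>i. if i \<in> I then 1\<^sub>m (d i) else 0\<^sub>m 0 0)"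

definition mm_linear :: "'i set \<Rightarrow> ('i \<Rightarrow> nat) \<Rightarrow> 'k set \<Rightarrow> ('k \<Rightarrow> nat)
    \<Rightarrow> (('i \<Rightarrow> complex mat) \<Rightarrow> ('k \<Rightarrow> complex mat)) \<Rightarrow> bool" where
  "mm_linear I d K e \<Phi> \<longleftrightarrow>
     (\<forall>X \<in> mm_carrier I d. \<Phi> X \<in> mm_carrier K e) \<and>
     (\<forall>X \<in> mm_carrier I d. \<forall>Y \<in> mm_carrier I d. \<Phi> (\<lambda>i. X i + Y i) = (\<lambda>k. \<Phi> X k + \<Phi> Y k)) \<and>
     (\<forall>X \<in> mm_carrier I d. \<forall>c::complex. \<Phi> (\<lambda>i. c \<cdot>\<^sub>m X i) = (\<lambda>k. c \<cdot>\<^sub>m \<Phi> X k))"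

text \<open>Amplification M_n(A) -> M_n(C): the block (i) of an element of M_n(A) is a matrix on
  C^n (x) C^(d i), index p * d i + a; the (p,q) entry of X in M_n(A) is the family of blocks.\<close>
definition blk :: "nat \<Rightarrow> complex mat \<Rightarrow> nat \<Rightarrow> nat \<Rightarrow> complex mat" where
  "blk m M p q = mat m m (\<lambda>(a,b). M $$ (p*m+a, q*m+b))"

definition assemble :: "nat \<Rightarrow> nat \<Rightarrow> (nat \<Rightarrow> nat \<Rightarrow> complex mat) \<Rightarrow> complex mat" where
  "assemble n m F = mat (n*m) (n*m) (\<lambda>(r,s). F (r div m) (s div m) $$ (r mod m, s mod m))"

definition amplify :: "nat \<Rightarrow> 'i set \<Rightarrow> ('i \<Rightarrow> nat) \<Rightarrow> 'k set \<Rightarrow> ('k \<Rightarrow> nat)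
    \<Rightarrow> (('i \<Rightarrow> complex mat) \<Rightarrow> ('k \<Rightarrow> complex mat))
    \<Rightarrow> ('i \<Rightarrow> complex mat) \<Rightarrow> ('k \<Rightarrow> complex mat)" where
  "amplify n I d K e \<Phi> X = (\<lambda>k. if k \<in> K then
      assemble n (e k) (\<lambda>p q. \<Phi> (\<lambda>i. if i \<in> I then blk (d i) (X i) p q else 0\<^sub>m 0 0) k)
    else 0\<^sub>m 0 0)"

definition mm_cp :: "'i set \<Rightarrow> ('i \<Rightarrow> nat) \<Rightarrow> 'k set \<Rightarrow> ('k \<Rightarrow> nat)
    \<Rightarrow> (('i \<Rightarrow> complex mat) \<Rightarrow> ('k \<Rightarrow> complex mat)) \<Rightarrow> bool" where
  "mm_cp I d K e \<Phi> \<longleftrightarrow> mm_linear I d K e \<Phi> \<and>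
     (\<forall>n>0. \<forall>X. mm_pos I (\<lambda>i. n * d i) X \<longrightarrow> mm_pos K (\<lambda>k. n * e k) (amplify n I d K e \<Phi> X))"

text \<open>Hom(A,B) = (+) over (j,i) in J x I of B(K_j (x) H_i); tensor index a * dim H_i + b.\<close>
definition hom_dim :: "('i \<Rightarrow> nat) \<Rightarrow> ('j \<Rightarrow> nat) \<Rightarrow> ('j \<times> 'i \<Rightarrow> nat)" where
  "hom_dim d e = (\<lambda>(j,i). e j * d i)"

definition tr_out :: "'i set \<Rightarrow> ('i \<Rightarrow> nat) \<Rightarrow> 'j set \<Rightarrow> ('j \<Rightarrow> nat)
    \<Rightarrow> ('j \<times> 'i \<Rightarrow> complex mat) \<Rightarrow> ('i \<Rightarrow> complex mat)" where
  "tr_out I d J e X = (\<lambda>i. if i \<in> I then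
      mat (d i) (d i) (\<lambda>(b,b'). \<Sum>j\<in>J. \<Sum>a<e j. X (j,i) $$ (a * d i + b, a * d i + b'))
    else 0\<^sub>m 0 0)"

definition is_TP :: "'i set \<Rightarrow> ('i \<Rightarrow> nat) \<Rightarrow> 'j set \<Rightarrow> ('j \<Rightarrow> nat)
    \<Rightarrow> ('j \<times> 'i \<Rightarrow> complex mat) \<Rightarrow> bool" where
  "is_TP I d J e X \<longleftrightarrow> tr_out I d J e X = mm_one I d"

definition deterministic_supermap ::
  "'i set \<Rightarrow> ('i \<Rightarrow> nat) \<Rightarrow> 'j set \<Rightarrow> ('j \<Rightarrow> nat)
   \<Rightarrow> 'k set \<Rightarrow> ('k \<Rightarrow> nat) \<Rightarrow> 'l set \<Rightarrow> ('l \<Rightarrow> nat)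
   \<Rightarrow> (('j \<times> 'i \<Rightarrow> complex mat) \<Rightarrow> ('l \<times> 'k \<Rightarrow> complex mat)) \<Rightarrow> bool" where
  "deterministic_supermap I dI J dJ K dK L dL S \<longleftrightarrow>
     mm_cp (J \<times> I) (hom_dim dI dJ) (L \<times> K) (hom_dim dK dL) S \<and>
     (\<forall>X. mm_pos (J \<times> I) (hom_dim dI dJ) X \<and> is_TP I dI J dJ X \<longrightarrow> is_TP K dK L dL (S X))"

end

theory Submission
  imports Defs
begin

definition qf :: "nat \<Rightarrow> complex mat \<Rightarrow> complex vec \<Rightarrow> complex" where
  "qf N M v = (\<Sum>r<N. \<Sum>s<N. cnj (v$r) * M$$(r,s) * v$s)"

definition nn :: "complex \<Rightarrow> bool" where "nn z \<longleftrightarrow> Im z = 0 \<and> Re z \<ge> 0"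

lemma nn_sum: "(\<And>x. x \<in> A \<Longrightarrow> nn (f x)) \<Longrightarrow> nn (sum f A)"
  unfolding nn_def by (auto simp: Im_sum Re_sum intro: sum_nonneg)

lemma nn_scale: "nn z \<Longrightarrow> c \<ge> 0 \<Longrightarrow> nn (complex_of_real c * z)"
  unfolding nn_def by auto

lemma qf_eq: assumes "M \<in> carrier_mat N N" "v \<in> carrier_vec N"
  shows "scalar_prod (conjugate v) (M *\<^sub>v v) = qf N M v"
proof -
  have "scalar_prod (conjugate v) (M *\<^sub>v v) = (\<Sum>r<N. cnj (v$r) * (\<Sum>s<N. M$$(r,s) * v$s))"
    using assms unfolding scalar_prod_def
    by (auto simp: mult_mat_vec_def row_def atLeast0LessThan scalar_prod_def intro!: sum.cong)
  also have "\<dots> = qf N M v" unfolding qf_def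
    by (simp add: sum_distrib_left mult.assoc)
  finally show ?thesis .
qed

lemma psd_iff: "psd_mat N M \<longleftrightarrow> M \<in> carrier_mat N N \<and> (\<forall>v\<in>carrier_vec N. nn (qf N M v))"
  unfolding psd_mat_def nn_def using qf_eq by auto

lemma split_sum: fixes n m :: nat shows "(\<Sum>r<n*m. f r) = (\<Sum>p<n. \<Sum>c<m. f (p*m+c))"
proof (induction n)
  case 0 then show ?case by simp
next
  case (Suc n)
  have "(\<Sum>r<Suc n*m. f r) = (\<Sum>r<n*m. f r) + (\<Sum>r\<in>{n*m..<n*m+m}. f r)"
    by (simp add: lessThan_atLeast0 add.commute sum.atLeastLessThan_concat)
  also have "(\<Sum>r\<in>{n*m..<n*m+m}. f r) = (\<Sum>c<m. f (n*m+c))"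
    using sum.shift_bounds_nat_ivl[where g=f and m=0 and k="n*m" and n=m]
    by (simp add: lessThan_atLeast0 add.commute)
  finally show ?case using Suc by simp
qed

lemma split3: fixes n A B :: nat shows "(\<Sum>r<n*(A*B). f r) = (\<Sum>a<A. \<Sum>t<n*B. f ((t div B)*(A*B) + a*B + t mod B))"
proof -
  have "(\<Sum>r<n*(A*B). f r) = (\<Sum>p<n. \<Sum>c<A*B. f (p*(A*B)+c))" by (rule split_sum)
  also have "\<dots> = (\<Sum>p<n. \<Sum>a<A. \<Sum>b<B. f (p*(A*B)+(a*B+b)))"
    by (simp add: split_sum)
  also have "\<dots> = (\<Sum>a<A. \<Sum>p<n. \<Sum>b<B. f (p*(A*B)+(a*B+b)))" by (rule sum.swap)
  also have "\<dots> = (\<Sum>a<A. \<Sum>t<n*B. f ((t div B)*(A*B) + a*B + t mod B))"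
  proof (rule sum.cong[OF refl])
    fix a assume "a \<in> {..<A}"
    show "(\<Sum>p<n. \<Sum>b<B. f (p*(A*B)+(a*B+b))) = (\<Sum>t<n*B. f ((t div B)*(A*B) + a*B + t mod B))"
      unfolding split_sum by (intro sum.cong refl) (auto simp add: add.assoc)
  qed
  finally show ?thesis .
qed


lemma qf_herm_real:
  assumes "\<forall>r<N. \<forall>s<N. H$$(r,s) = cnj (H$$(s,r))"
  shows "Im (qf N H v) = 0"
proof -
  have "cnj (qf N H v) = (\<Sum>r<N. \<Sum>s<N. v$r * H$$(s,r) * cnj (v$s))"
  proof -
    have h: "cnj (H$$(r,s)) = H$$(s,r)" if "r \<in> {..<N}" "s \<in> {..<N}" for r s
      using assms that by (metis complex_cnj_cnj lessThan_iff)
    show ?thesis unfolding qf_def cnj_sum by (intro sum.cong refl) (simp add: h)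
  qed
  also have "\<dots> = (\<Sum>s<N. \<Sum>r<N. v$r * H$$(s,r) * cnj (v$s))" by (rule sum.swap)
  also have "\<dots> = qf N H v" unfolding qf_def by (intro sum.cong refl) (simp add: mult.commute mult.left_commute)
  finally have "cnj (qf N H v) = qf N H v" .
  then show ?thesis by (metis Reals_cnj_iff complex_is_Real_iff)
qed

lemma cmod_prod_le:
  fixes v :: "complex vec"
  assumes "r < N" "s < N"
  shows "cmod (v$r) * cmod (v$s) \<le> (\<Sum>t<N. (cmod (v$t))^2)"
proof -
  have single: "(cmod (v$t))^2 \<le> (\<Sum>t<N. (cmod (v$t))^2)" if "t < N" for t
    using that by (intro member_le_sum) auto
  have "cmod (v$r) * cmod (v$s) \<le> max (cmod (v$r)) (cmod (v$s)) * max (cmod (v$r)) (cmod (v$s))"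
    by (intro mult_mono max.cobounded1 max.cobounded2) (auto intro: order.trans[OF norm_ge_zero max.cobounded1])
  also have "\<dots> \<le> (\<Sum>t<N. (cmod (v$t))^2)"
    using single[OF assms(1)] single[OF assms(2)] by (simp add: max_def power2_eq_square)
  finally show ?thesis .
qed

lemma qf_bound:
  shows "cmod (qf N H v) \<le> (\<Sum>r<N. \<Sum>s<N. cmod (H$$(r,s))) * (\<Sum>t<N. (cmod (v$t))^2)"
proof -
  have "cmod (qf N H v) \<le> (\<Sum>r<N. \<Sum>s<N. cmod (cnj (v$r) * H$$(r,s) * v$s))"
    unfolding qf_def by (rule order.trans[OF norm_sum sum_mono]) (rule norm_sum)
  also have "\<dots> \<le> (\<Sum>r<N. \<Sum>s<N. cmod (H$$(r,s)) * (\<Sum>t<N. (cmod (v$t))^2))"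
  proof (intro sum_mono)
    fix r s assume "r \<in> {..<N}" "s \<in> {..<N}"
    then have pr: "cmod (v$r) * cmod (v$s) \<le> (\<Sum>t<N. (cmod (v$t))^2)" by (intro cmod_prod_le) auto
    show "cmod (cnj (v$r) * H$$(r,s) * v$s) \<le> cmod (H$$(r,s)) * (\<Sum>t<N. (cmod (v$t))^2)"
      using mult_left_mono[OF pr norm_ge_zero[of "H$$(r,s)"]] by (simp add: norm_mult algebra_simps)
  qed
  also have "\<dots> = (\<Sum>r<N. \<Sum>s<N. cmod (H$$(r,s))) * (\<Sum>t<N. (cmod (v$t))^2)"
    by (simp add: sum_distrib_right)
  finally show ?thesis .
qed

lemma psd_pert:
  assumes M: "M \<in> carrier_mat N N"
    and Me: "\<forall>r<N. \<forall>s<N. M$$(r,s) = (if r=s then complex_of_real c else 0) + complex_of_real e * H$$(r,s)"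
    and herm: "\<forall>r<N. \<forall>s<N. H$$(r,s) = cnj (H$$(s,r))"
    and c: "c \<ge> 0" and e: "e \<ge> 0"
    and bd: "e * (\<Sum>r<N. \<Sum>s<N. cmod (H$$(r,s))) \<le> c"
  shows "psd_mat N M"
  unfolding psd_iff
proof (intro conjI ballI M)
  fix v :: "complex vec" assume "v \<in> carrier_vec N"
  define S2 where "S2 = (\<Sum>t<N. (cmod (v$t))^2)"
  have S2: "S2 \<ge> 0" unfolding S2_def by (intro sum_nonneg) auto
  have "qf N M v = (\<Sum>r<N. \<Sum>s<N. (if r = s then complex_of_real c * cnj (v$r) * v$s else 0)
        + complex_of_real e * (cnj (v$r) * H$$(r,s) * v$s))"
    unfolding qf_def using Me by (intro sum.cong refl) (simp add: algebra_simps)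
  also have "\<dots> = complex_of_real c * (\<Sum>r<N. cnj (v$r) * v$r) + complex_of_real e * qf N H v"
    unfolding qf_def by (simp add: sum.distrib sum_distrib_left mult.assoc)
  also have "(\<Sum>r<N. cnj (v$r) * v$r) = complex_of_real S2"
  proof -
    have "cnj z * z = complex_of_real ((cmod z)^2)" for z
      by (metis complex_norm_square mult.commute of_real_power)
    then show ?thesis unfolding S2_def of_real_sum by (intro sum.cong refl) simp
  qed
  finally have q: "qf N M v = complex_of_real (c * S2) + complex_of_real e * qf N H v" by simp
  have im: "Im (qf N H v) = 0" by (rule qf_herm_real[OF herm])
  have "\<bar>Re (qf N H v)\<bar> \<le> (\<Sum>r<N. \<Sum>s<N. cmod (H$$(r,s))) * S2"
    using qf_bound[of N H v] abs_Re_le_cmod[of "qf N H v"] unfolding S2_def by linarith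
  then have "e * \<bar>Re (qf N H v)\<bar> \<le> e * (\<Sum>r<N. \<Sum>s<N. cmod (H$$(r,s))) * S2"
    using e by (simp add: mult_left_mono mult.assoc)
  also have "\<dots> \<le> c * S2" using bd S2 by (rule mult_right_mono)
  finally have "e * \<bar>Re (qf N H v)\<bar> \<le> c * S2" .
  then have "0 \<le> c * S2 + e * Re (qf N H v)" using e
    by (smt (verit, ccfv_SIG) abs_ge_minus_self mult_left_mono mult_minus_right)
  then show "nn (qf N M v)" unfolding nn_def q using im by simp
qed


lemma mmc_add: "X \<in> mm_carrier I d \<Longrightarrow> Y \<in> mm_carrier I d \<Longrightarrow> (\<lambda>i. X i + Y i) \<in> mm_carrier I d"
  unfolding mm_carrier_def by auto

lemma mmc_smult: "X \<in> mm_carrier I d \<Longrightarrow> (\<lambda>i. c \<cdot>\<^sub>m X i) \<in> mm_carrier I d"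
  unfolding mm_carrier_def by auto

lemma tr_out_carrier: "tr_out I d J e X \<in> mm_carrier I d"
  unfolding mm_carrier_def tr_out_def by auto

lemma hd_idx: assumes "b < (d::nat)" "a < e" shows "a * d + b < e * d"
proof -
  have "a * d + b < a * d + d" using assms by simp
  also have "\<dots> = Suc a * d" by simp
  also have "\<dots> \<le> e * d" using assms by (intro mult_right_mono) auto
  finally show ?thesis .
qed

lemma tr_out_add:
  assumes "X \<in> mm_carrier (J \<times> I) (hom_dim d e)" "Y \<in> mm_carrier (J \<times> I) (hom_dim d e)"
  shows "tr_out I d J e (\<lambda>ji. X ji + Y ji) = (\<lambda>i. tr_out I d J e X i + tr_out I d J e Y i)"
proof
  fix i show "tr_out I d J e (\<lambda>ji. X ji + Y ji) i = tr_out I d J e X i + tr_out I d J e Y i"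
  proof (cases "i \<in> I")
    case True
    have cX: "X (j,i) \<in> carrier_mat (e j * d i) (e j * d i)" and cY: "Y (j,i) \<in> carrier_mat (e j * d i) (e j * d i)"
      if "j \<in> J" for j
      using assms that True unfolding mm_carrier_def hom_dim_def by auto
    have pt: "(X (j,i) + Y (j,i)) $$ (a*d i+b, a*d i+b') = X (j,i) $$ (a*d i+b, a*d i+b') + Y (j,i) $$ (a*d i+b, a*d i+b')"
      if "j\<in>J" "a<e j" "b<d i" "b'<d i" for j a b b'
      using cX[OF that(1)] cY[OF that(1)] hd_idx[OF that(3,2)] hd_idx[OF that(4,2)] by simp
    show ?thesis using True
      apply (simp add: tr_out_def)
      apply (intro eq_matI)
         apply (simp_all add: sum.distrib[symmetric])
      apply (intro sum.cong refl)
      apply (simp add: pt)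
      done
  qed (simp add: tr_out_def)
qed

lemma tr_out_smult:
  assumes "X \<in> mm_carrier (J \<times> I) (hom_dim d e)"
  shows "tr_out I d J e (\<lambda>ji. c \<cdot>\<^sub>m X ji) = (\<lambda>i. c \<cdot>\<^sub>m tr_out I d J e X i)"
proof
  fix i show "tr_out I d J e (\<lambda>ji. c \<cdot>\<^sub>m X ji) i = c \<cdot>\<^sub>m tr_out I d J e X i"
  proof (cases "i \<in> I")
    case True
    have cX: "X (j,i) \<in> carrier_mat (e j * d i) (e j * d i)" if "j \<in> J" for j
      using assms that True unfolding mm_carrier_def hom_dim_def by auto
    have pt: "(c \<cdot>\<^sub>m X (j,i)) $$ (a*d i+b, a*d i+b') = c * X (j,i) $$ (a*d i+b, a*d i+b')"
      if "j\<in>J" "a<e j" "b<d i" "b'<d i" for j a b b'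
      using cX[OF that(1)] hd_idx[OF that(3,2)] hd_idx[OF that(4,2)] by simp
    show ?thesis using True
      apply (simp add: tr_out_def)
      apply (intro eq_matI)
         apply (simp_all add: sum_distrib_left)
      apply (intro sum.cong refl)
      apply (simp add: pt)
      done
  qed (simp add: tr_out_def)
qed


section \<open>Index arithmetic\<close>

lemma idx3:
  fixes n A B a t :: nat
  assumes t: "t < n*B" and a: "a < A"
  defines "h \<equiv> (t div B)*(A*B) + a*B + t mod B"
  shows "h div (A*B) = t div B" "h mod (A*B) = a*B + t mod B" "(a*B + t mod B) div B = a"
    "(a*B + t mod B) mod B = t mod B" "h < n*(A*B)" "h mod B = t mod B" "(t div B)*B + t mod B = t"
    "a*B + t mod B < A*B"
proof -
  have B: "B > 0" using t by (cases B) auto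
  have c: "a*B + t mod B < A*B" using hd_idx[OF _ a] B by simp
  show "a*B + t mod B < A*B" by (rule c)
  have hh: "h = (t div B)*(A*B) + (a*B + t mod B)" unfolding h_def by simp
  have AB: "A*B \<noteq> 0" using c by (metis less_nat_zero_code)
  show "h div (A*B) = t div B" unfolding hh div_mult_self3[OF AB] div_less[OF c] by simp
  show "h mod (A*B) = a*B + t mod B" unfolding hh mod_mult_self3 mod_less[OF c] ..
  show "(a*B + t mod B) div B = a" using B by simp
  show "(a*B + t mod B) mod B = t mod B" using B by simp
  show "(t div B)*B + t mod B = t" by simp
  have "t div B < n" using t B by (simp add: div_less_iff_less_mult mult.commute)
  then have "t div B + 1 \<le> n" by simp
  then have "(t div B + 1) * (A*B) \<le> n * (A*B)" by (rule mult_right_mono) simp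
  then show "h < n*(A*B)" unfolding h_def using c by (simp add: algebra_simps)
  have "h = ((t div B)*A + a)*B + t mod B" unfolding h_def by (simp add: algebra_simps)
  then show "h mod B = t mod B" by (simp add: mod_mult_self3)
qed

lemma sum_single:
  assumes "finite A" "a \<in> A" "\<And>x. x \<in> A \<Longrightarrow> x \<noteq> a \<Longrightarrow> f x = 0"
  shows "sum f A = f a"
  using assms by (simp add: sum.remove sum.neutral)

lemma qf_split:
  fixes n A B :: nat
  shows "qf (n*(A*B)) M u = (\<Sum>a<A. \<Sum>r<n*B. \<Sum>a'<A. \<Sum>s<n*B.
     cnj (u $ ((r div B)*(A*B) + a*B + r mod B)) * M $$ ((r div B)*(A*B) + a*B + r mod B, (s div B)*(A*B) + a'*B + s mod B)
       * u $ ((s div B)*(A*B) + a'*B + s mod B))"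
  unfolding qf_def split3[of _ n A B] ..

lemma u_idx:
  fixes n A B a c r :: nat
  assumes r: "r < n*B" and a: "a < A"
  shows "vec (n*(A*B)) (\<lambda>t. if (t mod (A*B)) div B = c then v $ ((t div (A*B))*B + t mod B) else 0)
     $ ((r div B)*(A*B) + a*B + r mod B) = (if a = c then v $ r else 0)"
proof -
  note f = idx3[OF r a]
  have e1: "((r div B)*(A*B) + a*B + r mod B) mod (A*B) div B = a" using f by simp
  have e2: "((r div B)*(A*B) + a*B + r mod B) div (A*B) * B + ((r div B)*(A*B) + a*B + r mod B) mod B = r"
    using f by simp
  show ?thesis using f(5) by (simp only: index_vec e1 e2)
qed

lemma qf_pull:
  fixes n A B c :: nat
  assumes c: "c < A"
  shows "qf (n*(A*B)) M (vec (n*(A*B)) (\<lambda>t. if (t mod (A*B)) div B = c then v $ ((t div (A*B))*B + t mod B) else 0))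
    = (\<Sum>r<n*B. \<Sum>s<n*B. cnj (v$r) * M $$ ((r div B)*(A*B) + c*B + r mod B, (s div B)*(A*B) + c*B + s mod B) * v$s)"
  (is "qf _ _ ?u = ?R")
proof -
  have "qf (n*(A*B)) M ?u = (\<Sum>a<A. \<Sum>r<n*B. \<Sum>a'<A. \<Sum>s<n*B.
     cnj (?u $ ((r div B)*(A*B) + a*B + r mod B)) * M $$ ((r div B)*(A*B) + a*B + r mod B, (s div B)*(A*B) + a'*B + s mod B)
       * ?u $ ((s div B)*(A*B) + a'*B + s mod B))" by (rule qf_split)
  also have "\<dots> = (\<Sum>a<A. \<Sum>r<n*B. \<Sum>a'<A. \<Sum>s<n*B.
     cnj (if a = c then v $ r else 0) * M $$ ((r div B)*(A*B) + a*B + r mod B, (s div B)*(A*B) + a'*B + s mod B)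
       * (if a' = c then v $ s else 0))"
    by (intro sum.cong refl) (simp add: u_idx)
  also have "\<dots> = (\<Sum>r<n*B. \<Sum>a'<A. \<Sum>s<n*B.
     cnj (v $ r) * M $$ ((r div B)*(A*B) + c*B + r mod B, (s div B)*(A*B) + a'*B + s mod B)
       * (if a' = c then v $ s else 0))"
    using c by (subst sum_single[where a=c]) auto
  also have "\<dots> = ?R"
  proof (rule sum.cong[OF refl])
    fix r assume "r \<in> {..<n*B}"
    show "(\<Sum>a'<A. \<Sum>s<n*B. cnj (v $ r) * M $$ ((r div B)*(A*B) + c*B + r mod B, (s div B)*(A*B) + a'*B + s mod B)
       * (if a' = c then v $ s else 0)) = (\<Sum>s<n*B. cnj (v$r) * M $$ ((r div B)*(A*B) + c*B + r mod B, (s div B)*(A*B) + c*B + s mod B) * v$s)"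
      using c by (subst sum_single[where A="{..<A}" and a=c]) auto
  qed
  finally show ?thesis .
qed

locale setting =
  fixes I :: "'i set" and J :: "'j set" and K :: "'k set" and L :: "'l set"
    and dI :: "'i \<Rightarrow> nat" and dJ :: "'j \<Rightarrow> nat" and dK :: "'k \<Rightarrow> nat" and dL :: "'l \<Rightarrow> nat"
    and S :: "('j \<times> 'i \<Rightarrow> complex mat) \<Rightarrow> ('l \<times> 'k \<Rightarrow> complex mat)"
  assumes vI: "valid_mm I dI" and vJ: "valid_mm J dJ" and vK: "valid_mm K dK" and vL: "valid_mm L dL"
    and ds: "deterministic_supermap I dI J dJ K dK L dL S"
begin

lemma S_lin: "mm_linear (J \<times> I) (hom_dim dI dJ) (L \<times> K) (hom_dim dK dL) S"
  using ds unfolding deterministic_supermap_def mm_cp_def by auto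

lemma S_carrier: "X \<in> mm_carrier (J \<times> I) (hom_dim dI dJ) \<Longrightarrow> S X \<in> mm_carrier (L \<times> K) (hom_dim dK dL)"
  using S_lin unfolding mm_linear_def by auto

lemma S_add: "X \<in> mm_carrier (J \<times> I) (hom_dim dI dJ) \<Longrightarrow> Y \<in> mm_carrier (J \<times> I) (hom_dim dI dJ) \<Longrightarrow>
   S (\<lambda>i. X i + Y i) = (\<lambda>k. S X k + S Y k)"
  using S_lin unfolding mm_linear_def by auto

lemma S_smult: "X \<in> mm_carrier (J \<times> I) (hom_dim dI dJ) \<Longrightarrow> S (\<lambda>i. c \<cdot>\<^sub>m X i) = (\<lambda>k. c \<cdot>\<^sub>m S X k)"
  using S_lin unfolding mm_linear_def by auto

lemma S_TP: "mm_pos (J \<times> I) (hom_dim dI dJ) X \<Longrightarrow> is_TP I dI J dJ X \<Longrightarrow> is_TP K dK L dL (S X)"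
  using ds unfolding deterministic_supermap_def by auto

lemma S_cp: "n > 0 \<Longrightarrow> mm_pos (J \<times> I) (\<lambda>ji. n * hom_dim dI dJ ji) X \<Longrightarrow>
   mm_pos (L \<times> K) (\<lambda>lk. n * hom_dim dK dL lk) (amplify n (J \<times> I) (hom_dim dI dJ) (L \<times> K) (hom_dim dK dL) S X)"
  using ds unfolding deterministic_supermap_def mm_cp_def by auto

definition Dt :: nat where "Dt = (\<Sum>j\<in>J. dJ j)"

lemma Dt_pos: "Dt > 0"
  using vJ unfolding Dt_def valid_mm_def by (intro sum_pos) auto

definition emb :: "('i \<Rightarrow> complex mat) \<Rightarrow> ('j \<times> 'i \<Rightarrow> complex mat)" where
  "emb X = (\<lambda>ji. if ji \<in> J \<times> I then mat (hom_dim dI dJ ji) (hom_dim dI dJ ji)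
      (\<lambda>(r,s). if r div dI (snd ji) = s div dI (snd ji)
         then X (snd ji) $$ (r mod dI (snd ji), s mod dI (snd ji)) / of_nat Dt else 0) else 0\<^sub>m 0 0)"

lemma emb_carrier: "emb X \<in> mm_carrier (J \<times> I) (hom_dim dI dJ)"
  unfolding mm_carrier_def emb_def by auto

lemma dI_pos: "i \<in> I \<Longrightarrow> dI i > 0" using vI unfolding valid_mm_def by auto

lemma emb_tr: assumes X: "X \<in> mm_carrier I dI" shows "tr_out I dI J dJ (emb X) = X"
proof
  fix i show "tr_out I dI J dJ (emb X) i = X i"
  proof (cases "i \<in> I")
    case True
    have cX: "X i \<in> carrier_mat (dI i) (dI i)" using X True unfolding mm_carrier_def by auto
    have ent: "emb X (j,i) $$ (a*dI i+b, a*dI i+b') = X i $$ (b,b') / of_nat Dt"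
      if "j\<in>J" "a<dJ j" "b<dI i" "b'<dI i" for j a b b'
      using True that hd_idx[OF that(3,2)] hd_idx[OF that(4,2)] by (simp add: emb_def hom_dim_def)
    have "(\<Sum>j\<in>J. \<Sum>a<dJ j. emb X (j,i) $$ (a*dI i+b, a*dI i+b')) = X i $$ (b,b')"
      if "b<dI i" "b'<dI i" for b b'
    proof -
      have "(\<Sum>j\<in>J. \<Sum>a<dJ j. emb X (j,i) $$ (a*dI i+b, a*dI i+b')) = (\<Sum>j\<in>J. \<Sum>a<dJ j. X i $$ (b,b') / of_nat Dt)"
        using ent that by (intro sum.cong refl) auto
      also have "\<dots> = of_nat Dt * (X i $$ (b,b') / of_nat Dt)"
        unfolding Dt_def by (simp add: sum_distrib_right sum_divide_distrib)
      also have "\<dots> = X i $$ (b,b')" using Dt_pos by simp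
      finally show ?thesis .
    qed
    then show ?thesis using True cX by (auto simp: tr_out_def intro!: eq_matI)
  next
    case False then show ?thesis using X unfolding tr_out_def mm_carrier_def by auto
  qed
qed

lemma emb_add: assumes X: "X \<in> mm_carrier I dI" and Y: "Y \<in> mm_carrier I dI"
  shows "emb (\<lambda>i. X i + Y i) = (\<lambda>ji. emb X ji + emb Y ji)"
proof
  fix ji show "emb (\<lambda>i. X i + Y i) ji = emb X ji + emb Y ji"
  proof (cases "ji \<in> J \<times> I")
    case True
    then have i: "snd ji \<in> I" by auto
    have cX: "X (snd ji) \<in> carrier_mat (dI (snd ji)) (dI (snd ji))" "Y (snd ji) \<in> carrier_mat (dI (snd ji)) (dI (snd ji))"
      using X Y i unfolding mm_carrier_def by auto
    show ?thesis using True cX dI_pos[OF i] by (auto simp: emb_def add_divide_distrib intro!: eq_matI)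
  qed (simp add: emb_def)
qed

lemma emb_smult: assumes X: "X \<in> mm_carrier I dI"
  shows "emb (\<lambda>i. c \<cdot>\<^sub>m X i) = (\<lambda>ji. c \<cdot>\<^sub>m emb X ji)"
proof
  fix ji show "emb (\<lambda>i. c \<cdot>\<^sub>m X i) ji = c \<cdot>\<^sub>m emb X ji"
  proof (cases "ji \<in> J \<times> I")
    case True
    then have i: "snd ji \<in> I" by auto
    have cX: "X (snd ji) \<in> carrier_mat (dI (snd ji)) (dI (snd ji))"
      using X i unfolding mm_carrier_def by auto
    show ?thesis using True cX dI_pos[OF i] by (auto simp: emb_def intro!: eq_matI)
  qed (simp add: emb_def)
qed

definition N :: "('i \<Rightarrow> complex mat) \<Rightarrow> ('k \<Rightarrow> complex mat)" where
  "N X = tr_out K dK L dL (S (emb X))"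

lemma N_lin: "mm_linear I dI K dK N"
  unfolding mm_linear_def N_def
  by (simp add: tr_out_carrier emb_add emb_smult S_add S_smult emb_carrier S_carrier tr_out_add tr_out_smult)

definition mm_zero :: "'a set \<Rightarrow> ('a \<Rightarrow> nat) \<Rightarrow> 'a \<Rightarrow> complex mat" where
  "mm_zero A d = (\<lambda>a. if a \<in> A then 0\<^sub>m (d a) (d a) else 0\<^sub>m 0 0)"

lemma hd_simp[simp]: "hom_dim d e (j,i) = e j * d i" by (simp add: hom_dim_def)

lemma emb_one_ent: assumes "ji \<in> J \<times> I" "r < hom_dim dI dJ ji" "s < hom_dim dI dJ ji"
  shows "emb (mm_one I dI) ji $$ (r,s) = (if r = s then 1 / of_nat Dt else 0)"
proof -
  obtain j i where ji: "ji = (j,i)" "j \<in> J" "i \<in> I" using assms by auto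
  have d: "dI i > 0" using dI_pos ji by auto
  have "(r div dI i = s div dI i \<and> r mod dI i = s mod dI i) \<longleftrightarrow> r = s"
    by (metis div_mult_mod_eq)
  then show ?thesis using assms ji d by (auto simp: emb_def mm_one_def)
qed

lemma one_carrier: "mm_one I dI \<in> mm_carrier I dI" unfolding mm_one_def mm_carrier_def by auto

lemma emb_one_pos: "mm_pos (J \<times> I) (hom_dim dI dJ) (emb (mm_one I dI))"
  unfolding mm_pos_def
proof (intro conjI ballI emb_carrier)
  fix ji assume ji: "ji \<in> J \<times> I"
  show "psd_mat (hom_dim dI dJ ji) (emb (mm_one I dI) ji)"
    apply (rule psd_pert[where c="1 / real Dt" and e=0 and H="0\<^sub>m (hom_dim dI dJ ji) (hom_dim dI dJ ji)"])
    using ji emb_carrier[of "mm_one I dI"] unfolding mm_carrier_def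
    by (auto simp: emb_one_ent)
qed

lemma emb_one_TP: "is_TP I dI J dJ (emb (mm_one I dI))"
  unfolding is_TP_def using emb_tr[OF one_carrier] .

lemma N_unital: "N (mm_one I dI) = mm_one K dK"
  using S_TP[OF emb_one_pos emb_one_TP] unfolding N_def is_TP_def .

lemma ker_herm:
  assumes H: "H \<in> mm_carrier (J \<times> I) (hom_dim dI dJ)"
    and herm: "\<forall>ji\<in>J \<times> I. \<forall>r<hom_dim dI dJ ji. \<forall>s<hom_dim dI dJ ji. H ji $$ (r,s) = cnj (H ji $$ (s,r))"
    and tr0: "tr_out I dI J dJ H = mm_zero I dI"
  shows "tr_out K dK L dL (S H) = mm_zero K dK"
proof -
  define M where "M = (\<Sum>ji\<in>J \<times> I. \<Sum>r<hom_dim dI dJ ji. \<Sum>s<hom_dim dI dJ ji. cmod (H ji $$ (r,s)))"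
  define c where "c = 1 / real Dt"
  define \<epsilon> where "\<epsilon> = c / (M + 1)"
  define E where "E = emb (mm_one I dI)"
  define P where "P = (\<lambda>ji. E ji + complex_of_real \<epsilon> \<cdot>\<^sub>m H ji)"
  have M0: "M \<ge> 0" unfolding M_def by (intro sum_nonneg) auto
  have c0: "c > 0" unfolding c_def using Dt_pos by simp
  have e0: "\<epsilon> > 0" unfolding \<epsilon>_def using c0 M0 by simp
  have fin: "finite (J \<times> I)" using vI vJ unfolding valid_mm_def by auto
  have Ec: "E \<in> mm_carrier (J \<times> I) (hom_dim dI dJ)" unfolding E_def by (rule emb_carrier)
  have Hs: "(\<lambda>ji. complex_of_real \<epsilon> \<cdot>\<^sub>m H ji) \<in> mm_carrier (J \<times> I) (hom_dim dI dJ)"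
    using H by (rule mmc_smult)
  have Pc: "P \<in> mm_carrier (J \<times> I) (hom_dim dI dJ)" unfolding P_def using Ec Hs by (rule mmc_add)
  have Ppos: "mm_pos (J \<times> I) (hom_dim dI dJ) P"
    unfolding mm_pos_def
  proof (intro conjI ballI Pc)
    fix ji assume ji: "ji \<in> J \<times> I"
    have cE: "E ji \<in> carrier_mat (hom_dim dI dJ ji) (hom_dim dI dJ ji)"
      and cH: "H ji \<in> carrier_mat (hom_dim dI dJ ji) (hom_dim dI dJ ji)"
      using Ec H ji unfolding mm_carrier_def by auto
    have loc: "(\<Sum>r<hom_dim dI dJ ji. \<Sum>s<hom_dim dI dJ ji. cmod (H ji $$ (r,s))) \<le> M"
      unfolding M_def using fin ji
      by (intro member_le_sum[where f="\<lambda>ji. \<Sum>r<hom_dim dI dJ ji. \<Sum>s<hom_dim dI dJ ji. cmod (H ji $$ (r,s))"])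
         (auto intro!: sum_nonneg)
    have "\<epsilon> * (\<Sum>r<hom_dim dI dJ ji. \<Sum>s<hom_dim dI dJ ji. cmod (H ji $$ (r,s))) \<le> \<epsilon> * (M + 1)"
      using loc e0 by (intro mult_left_mono) auto
    also have "\<dots> = c" unfolding \<epsilon>_def using M0 by simp
    finally have bd: "\<epsilon> * (\<Sum>r<hom_dim dI dJ ji. \<Sum>s<hom_dim dI dJ ji. cmod (H ji $$ (r,s))) \<le> c" .
    show "psd_mat (hom_dim dI dJ ji) (P ji)"
    proof (rule psd_pert[where c=c and e=\<epsilon> and H="H ji"])
      show "P ji \<in> carrier_mat (hom_dim dI dJ ji) (hom_dim dI dJ ji)" unfolding P_def using cE cH by simp
      show "\<forall>r<hom_dim dI dJ ji. \<forall>s<hom_dim dI dJ ji. P ji $$ (r, s) =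
          (if r = s then complex_of_real c else 0) + complex_of_real \<epsilon> * H ji $$ (r, s)"
      proof (intro allI impI)
        fix r s assume rs: "r < hom_dim dI dJ ji" "s < hom_dim dI dJ ji"
        have cc: "complex_of_real c = 1 / of_nat Dt" unfolding c_def by simp
        have "P ji $$ (r,s) = E ji $$ (r,s) + complex_of_real \<epsilon> * H ji $$ (r,s)"
          unfolding P_def using cE cH rs by simp
        then show "P ji $$ (r, s) = (if r = s then complex_of_real c else 0) + complex_of_real \<epsilon> * H ji $$ (r, s)"
          unfolding E_def emb_one_ent[OF ji rs] cc by simp
      qed
      show "\<forall>r<hom_dim dI dJ ji. \<forall>s<hom_dim dI dJ ji. H ji $$ (r, s) = cnj (H ji $$ (s, r))"
        using bspec[OF herm ji] .
      show "0 \<le> c" using c0 by simp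
      show "0 \<le> \<epsilon>" using e0 by simp
      show "\<epsilon> * (\<Sum>r<hom_dim dI dJ ji. \<Sum>s<hom_dim dI dJ ji. cmod (H ji $$ (r, s))) \<le> c" by (rule bd)
    qed
  qed
  have trE: "tr_out I dI J dJ E = mm_one I dI" unfolding E_def by (rule emb_tr[OF one_carrier])
  have "tr_out I dI J dJ P = mm_one I dI"
    unfolding P_def tr_out_add[OF Ec Hs] tr_out_smult[OF H] trE tr0
  proof
    fix i show "mm_one I dI i + complex_of_real \<epsilon> \<cdot>\<^sub>m mm_zero I dI i = mm_one I dI i"
      by (cases "i \<in> I") (auto simp: mm_one_def mm_zero_def)
  qed
  then have "is_TP I dI J dJ P" unfolding is_TP_def .
  then have trSP: "tr_out K dK L dL (S P) = mm_one K dK" using S_TP[OF Ppos] unfolding is_TP_def by simp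
  have trSE: "tr_out K dK L dL (S E) = mm_one K dK"
    using N_unital unfolding N_def E_def .
  have SE: "S E \<in> mm_carrier (L \<times> K) (hom_dim dK dL)" using S_carrier[OF Ec] .
  have SH: "S H \<in> mm_carrier (L \<times> K) (hom_dim dK dL)" using S_carrier[OF H] .
  have SP: "S P = (\<lambda>lk. S E lk + complex_of_real \<epsilon> \<cdot>\<^sub>m S H lk)"
    unfolding P_def S_add[OF Ec Hs] S_smult[OF H] ..
  have eq: "(\<lambda>k. mm_one K dK k + complex_of_real \<epsilon> \<cdot>\<^sub>m tr_out K dK L dL (S H) k) = mm_one K dK"
    using trSP unfolding SP tr_out_add[OF SE mmc_smult[OF SH]] tr_out_smult[OF SH] trSE .
  show ?thesis
  proof
    fix k show "tr_out K dK L dL (S H) k = mm_zero K dK k"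
    proof (cases "k \<in> K")
      case True
      have "tr_out K dK L dL (S H) k $$ (b,b') = 0" if "b < dK k" "b' < dK k" for b b'
      proof -
        have "(mm_one K dK k + complex_of_real \<epsilon> \<cdot>\<^sub>m tr_out K dK L dL (S H) k) $$ (b,b') = mm_one K dK k $$ (b,b')"
          using fun_cong[OF eq, of k] by simp
        then show ?thesis using True that e0 by (simp add: mm_one_def tr_out_def)
      qed
      then show ?thesis using True by (auto simp: tr_out_def mm_zero_def intro!: eq_matI)
    qed (simp add: tr_out_def mm_zero_def)
  qed
qed

lemma ker:
  assumes Y: "Y \<in> mm_carrier (J \<times> I) (hom_dim dI dJ)"
    and tr0: "tr_out I dI J dJ Y = mm_zero I dI"
  shows "tr_out K dK L dL (S Y) = mm_zero K dK"
proof -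
  define H1 where "H1 = (\<lambda>ji. if ji \<in> J \<times> I then mat (hom_dim dI dJ ji) (hom_dim dI dJ ji)
     (\<lambda>(r,s). (Y ji $$ (r,s) + cnj (Y ji $$ (s,r))) / 2) else 0\<^sub>m 0 0)"
  define H2 where "H2 = (\<lambda>ji. if ji \<in> J \<times> I then mat (hom_dim dI dJ ji) (hom_dim dI dJ ji)
     (\<lambda>(r,s). (Y ji $$ (r,s) - cnj (Y ji $$ (s,r))) / (2 * \<i>)) else 0\<^sub>m 0 0)"
  have H1c: "H1 \<in> mm_carrier (J \<times> I) (hom_dim dI dJ)" unfolding H1_def mm_carrier_def by auto
  have H2c: "H2 \<in> mm_carrier (J \<times> I) (hom_dim dI dJ)" unfolding H2_def mm_carrier_def by auto
  have h1: "\<forall>ji\<in>J \<times> I. \<forall>r<hom_dim dI dJ ji. \<forall>s<hom_dim dI dJ ji. H1 ji $$ (r,s) = cnj (H1 ji $$ (s,r))"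
    unfolding H1_def by (auto simp: add.commute)
  have h2: "\<forall>ji\<in>J \<times> I. \<forall>r<hom_dim dI dJ ji. \<forall>s<hom_dim dI dJ ji. H2 ji $$ (r,s) = cnj (H2 ji $$ (s,r))"
    unfolding H2_def by (auto simp: field_simps)
  have trY: "(\<Sum>j\<in>J. \<Sum>a<dJ j. Y (j,i) $$ (a * dI i + b, a * dI i + b')) = 0"
    if "i \<in> I" "b < dI i" "b' < dI i" for i b b'
  proof -
    have "tr_out I dI J dJ Y i $$ (b,b') = 0" using tr0 that by (simp add: mm_zero_def)
    then show ?thesis using that by (simp add: tr_out_def)
  qed
  have t1: "tr_out I dI J dJ H1 = mm_zero I dI"
  proof
    fix i show "tr_out I dI J dJ H1 i = mm_zero I dI i"
    proof (cases "i \<in> I")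
      case True
      have "(\<Sum>j\<in>J. \<Sum>a<dJ j. H1 (j,i) $$ (a * dI i + b, a * dI i + b')) = 0"
        if "b < dI i" "b' < dI i" for b b'
      proof -
        have "(\<Sum>j\<in>J. \<Sum>a<dJ j. H1 (j,i) $$ (a * dI i + b, a * dI i + b')) =
          (\<Sum>j\<in>J. \<Sum>a<dJ j. (Y (j,i) $$ (a * dI i + b, a * dI i + b') + cnj (Y (j,i) $$ (a * dI i + b', a * dI i + b))) / 2)"
          using True that hd_idx[OF that(1)] hd_idx[OF that(2)] by (intro sum.cong refl) (auto simp: H1_def)
        also have "\<dots> = ((\<Sum>j\<in>J. \<Sum>a<dJ j. Y (j,i) $$ (a * dI i + b, a * dI i + b')) +
            cnj (\<Sum>j\<in>J. \<Sum>a<dJ j. Y (j,i) $$ (a * dI i + b', a * dI i + b))) / 2"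
          by (simp only: sum_divide_distrib[symmetric] sum.distrib cnj_sum)
        also have "\<dots> = 0" using trY True that by simp
        finally show ?thesis .
      qed
      then show ?thesis using True by (auto simp: tr_out_def mm_zero_def intro!: eq_matI)
    qed (simp add: tr_out_def mm_zero_def)
  qed
  have t2: "tr_out I dI J dJ H2 = mm_zero I dI"
  proof
    fix i show "tr_out I dI J dJ H2 i = mm_zero I dI i"
    proof (cases "i \<in> I")
      case True
      have "(\<Sum>j\<in>J. \<Sum>a<dJ j. H2 (j,i) $$ (a * dI i + b, a * dI i + b')) = 0"
        if "b < dI i" "b' < dI i" for b b'
      proof -
        have "(\<Sum>j\<in>J. \<Sum>a<dJ j. H2 (j,i) $$ (a * dI i + b, a * dI i + b')) =
          (\<Sum>j\<in>J. \<Sum>a<dJ j. (Y (j,i) $$ (a * dI i + b, a * dI i + b') - cnj (Y (j,i) $$ (a * dI i + b', a * dI i + b))) / (2 * \<i>))"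
          using True that hd_idx[OF that(1)] hd_idx[OF that(2)] by (intro sum.cong refl) (auto simp: H2_def)
        also have "\<dots> = ((\<Sum>j\<in>J. \<Sum>a<dJ j. Y (j,i) $$ (a * dI i + b, a * dI i + b')) -
            cnj (\<Sum>j\<in>J. \<Sum>a<dJ j. Y (j,i) $$ (a * dI i + b', a * dI i + b))) / (2 * \<i>)"
          by (simp only: sum_divide_distrib[symmetric] sum_subtractf cnj_sum)
        also have "\<dots> = 0" using trY True that by simp
        finally show ?thesis .
      qed
      then show ?thesis using True by (auto simp: tr_out_def mm_zero_def intro!: eq_matI)
    qed (simp add: tr_out_def mm_zero_def)
  qed
  have s1: "tr_out K dK L dL (S H1) = mm_zero K dK" by (rule ker_herm[OF H1c h1 t1])
  have s2: "tr_out K dK L dL (S H2) = mm_zero K dK" by (rule ker_herm[OF H2c h2 t2])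
  have Yeq: "Y = (\<lambda>ji. H1 ji + \<i> \<cdot>\<^sub>m H2 ji)"
  proof
    fix ji show "Y ji = H1 ji + \<i> \<cdot>\<^sub>m H2 ji"
    proof (cases "ji \<in> J \<times> I")
      case True
      then have cY: "Y ji \<in> carrier_mat (hom_dim dI dJ ji) (hom_dim dI dJ ji)" using Y unfolding mm_carrier_def by auto
      have e: "(a + c) / 2 + \<i> * ((a - c) / (2 * \<i>)) = a" for a c :: complex by (simp add: field_simps)
      have e2: "a = (a + c) / 2 - (c - a) / 2" for a c :: complex by (simp add: field_simps)
      show ?thesis using True cY by (auto simp: H1_def H2_def e intro!: eq_matI) (rule e2)
    next
      case False
      then have "Y ji = 0\<^sub>m 0 0" using Y unfolding mm_carrier_def by blast
      then show ?thesis using False by (auto simp: H1_def H2_def intro!: eq_matI)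
    qed
  qed
  have SH: "S H1 \<in> mm_carrier (L \<times> K) (hom_dim dK dL)" "S H2 \<in> mm_carrier (L \<times> K) (hom_dim dK dL)"
    using S_carrier H1c H2c by auto
  have "tr_out K dK L dL (S Y) = (\<lambda>k. mm_zero K dK k + \<i> \<cdot>\<^sub>m mm_zero K dK k)"
    unfolding Yeq S_add[OF H1c mmc_smult[OF H2c]] S_smult[OF H2c] tr_out_add[OF SH(1) mmc_smult[OF SH(2)]]
      tr_out_smult[OF SH(2)] s1 s2 ..
  also have "\<dots> = mm_zero K dK"
  proof
    fix k show "mm_zero K dK k + \<i> \<cdot>\<^sub>m mm_zero K dK k = mm_zero K dK k"
      by (cases "k \<in> K") (auto simp: mm_zero_def)
  qed
  finally show ?thesis .
qed

lemma fam_eq: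
  assumes "A \<in> mm_carrier K d" "B \<in> mm_carrier K d" "(\<lambda>k. A k + (-1) \<cdot>\<^sub>m B k) = mm_zero K d"
  shows "A = B"
proof
  fix k show "A k = B k"
  proof (cases "k \<in> K")
    case True
    have cA: "A k \<in> carrier_mat (d k) (d k)" "B k \<in> carrier_mat (d k) (d k)" using assms True unfolding mm_carrier_def by auto
    have "(A k + (-1) \<cdot>\<^sub>m B k) $$ (r,s) = 0" if "r < d k" "s < d k" for r s
      using fun_cong[OF assms(3), of k] True that cA by (simp add: mm_zero_def)
    then show ?thesis using cA by (intro eq_matI) auto
  next
    case False then show ?thesis using assms unfolding mm_carrier_def by auto
  qed
qed

lemma main_eq:
  assumes X: "mm_pos (J \<times> I) (hom_dim dI dJ) X"
  shows "tr_out K dK L dL (S X) = N (tr_out I dI J dJ X)"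
proof -
  have Xc: "X \<in> mm_carrier (J \<times> I) (hom_dim dI dJ)" using X unfolding mm_pos_def by auto
  define T where "T = tr_out I dI J dJ X"
  have Tc: "T \<in> mm_carrier I dI" unfolding T_def by (rule tr_out_carrier)
  have Ec: "emb T \<in> mm_carrier (J \<times> I) (hom_dim dI dJ)" by (rule emb_carrier)
  define Y where "Y = (\<lambda>ji. X ji + (-1) \<cdot>\<^sub>m emb T ji)"
  have Yc: "Y \<in> mm_carrier (J \<times> I) (hom_dim dI dJ)" unfolding Y_def by (intro mmc_add mmc_smult Xc Ec)
  have "tr_out I dI J dJ Y = (\<lambda>i. T i + (-1) \<cdot>\<^sub>m T i)"
    unfolding Y_def tr_out_add[OF Xc mmc_smult[OF Ec]] tr_out_smult[OF Ec] emb_tr[OF Tc] T_def[symmetric] ..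
  also have "\<dots> = mm_zero I dI"
  proof
    fix i show "T i + (-1) \<cdot>\<^sub>m T i = mm_zero I dI i"
    proof (cases "i \<in> I")
      case True
      then have "T i \<in> carrier_mat (dI i) (dI i)" using Tc unfolding mm_carrier_def by auto
      then show ?thesis using True by (auto simp: mm_zero_def intro!: eq_matI)
    next
      case False then show ?thesis using Tc by (auto simp: mm_zero_def mm_carrier_def intro!: eq_matI)
    qed
  qed
  finally have "tr_out K dK L dL (S Y) = mm_zero K dK" by (rule ker[OF Yc])
  moreover have "tr_out K dK L dL (S Y) = (\<lambda>k. tr_out K dK L dL (S X) k + (-1) \<cdot>\<^sub>m N T k)"
    unfolding Y_def S_add[OF Xc mmc_smult[OF Ec]] S_smult[OF Ec]
      tr_out_add[OF S_carrier[OF Xc] mmc_smult[OF S_carrier[OF Ec]]] tr_out_smult[OF S_carrier[OF Ec]] N_def ..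
  ultimately have eq: "(\<lambda>k. tr_out K dK L dL (S X) k + (-1) \<cdot>\<^sub>m N T k) = mm_zero K dK" by simp
  have "tr_out K dK L dL (S X) = N T"
    by (rule fam_eq[OF tr_out_carrier _ eq]) (simp add: N_def tr_out_carrier)
  then show ?thesis unfolding T_def .
qed

lemma amp_ent: "k \<in> K' \<Longrightarrow> r < n * e k \<Longrightarrow> s < n * e k \<Longrightarrow>
  amplify n I' d K' e \<Phi> X k $$ (r,s) = \<Phi> (\<lambda>i. if i \<in> I' then blk (d i) (X i) (r div e k) (s div e k) else 0\<^sub>m 0 0) k $$ (r mod e k, s mod e k)"
  by (simp add: amplify_def assemble_def)

lemma N_cp_pos:
  assumes n: "n > 0" and X: "mm_pos I (\<lambda>i. n * dI i) X"
  shows "mm_pos K (\<lambda>k. n * dK k) (amplify n I dI K dK N X)"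
proof -
  have Xc: "\<And>i. i \<in> I \<Longrightarrow> X i \<in> carrier_mat (n * dI i) (n * dI i)"
    and Xp: "\<And>i. i \<in> I \<Longrightarrow> psd_mat (n * dI i) (X i)"
    using X unfolding mm_pos_def mm_carrier_def by auto
  define Z where "Z = (\<lambda>ji. if ji \<in> J \<times> I then mat (n * hom_dim dI dJ ji) (n * hom_dim dI dJ ji)
     (\<lambda>(r,s). if (r mod hom_dim dI dJ ji) div dI (snd ji) = (s mod hom_dim dI dJ ji) div dI (snd ji)
        then X (snd ji) $$ ((r div hom_dim dI dJ ji) * dI (snd ji) + r mod dI (snd ji),
                            (s div hom_dim dI dJ ji) * dI (snd ji) + s mod dI (snd ji)) / of_nat Dt
        else 0) else 0\<^sub>m 0 0)"
  have Zent: "Z (j,i) $$ ((t div dI i)*(dJ j*dI i) + a*dI i + t mod dI i, (t' div dI i)*(dJ j*dI i) + a'*dI i + t' mod dI i)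
     = (if a = a' then X i $$ (t,t') / of_nat Dt else 0)"
    if "j \<in> J" "i \<in> I" "a < dJ j" "a' < dJ j" "t < n * dI i" "t' < n * dI i" for j i a a' t t'
  proof -
    note f = idx3[OF that(5) that(3)] and g = idx3[OF that(6) that(4)]
    show ?thesis
    proof (cases "a = a'")
      case True then show ?thesis using that f g by (simp add: Z_def)
    next
      case False then show ?thesis using that f g by (simp add: Z_def)
    qed
  qed
  have Zpos: "mm_pos (J \<times> I) (\<lambda>ji. n * hom_dim dI dJ ji) Z"
    unfolding mm_pos_def
  proof (intro conjI ballI)
    show "Z \<in> mm_carrier (J \<times> I) (\<lambda>ji. n * hom_dim dI dJ ji)" unfolding Z_def mm_carrier_def by auto
    fix ji assume ji: "ji \<in> J \<times> I"
    then obtain j i where jiE: "ji = (j,i)" "j \<in> J" "i \<in> I" by auto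
    show "psd_mat (n * hom_dim dI dJ ji) (Z ji)"
      unfolding psd_iff jiE(1) hd_simp
    proof (intro conjI ballI)
      show "Z (j, i) \<in> carrier_mat (n * (dJ j * dI i)) (n * (dJ j * dI i))" using jiE by (simp add: Z_def)
      fix u :: "complex vec" assume "u \<in> carrier_vec (n * (dJ j * dI i))"
      define h where "h a t = (t div dI i)*(dJ j*dI i) + a*dI i + t mod dI i" for a t
      define w where "w a = vec (n * dI i) (\<lambda>t. u $ h a t)" for a
      have "qf (n * (dJ j * dI i)) (Z (j,i)) u = (\<Sum>a<dJ j. \<Sum>r<n*dI i. \<Sum>a'<dJ j. \<Sum>s<n*dI i.
         cnj (u $ h a r) * Z (j,i) $$ (h a r, h a' s) * u $ h a' s)"
        unfolding h_def by (rule qf_split)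
      also have "\<dots> = (\<Sum>a<dJ j. complex_of_real (1 / real Dt) * qf (n * dI i) (X i) (w a))"
      proof (rule sum.cong[OF refl])
        fix a assume a: "a \<in> {..<dJ j}"
        have "(\<Sum>r<n*dI i. \<Sum>a'<dJ j. \<Sum>s<n*dI i. cnj (u $ h a r) * Z (j,i) $$ (h a r, h a' s) * u $ h a' s)
           = (\<Sum>r<n*dI i. \<Sum>s<n*dI i. cnj (u $ h a r) * Z (j,i) $$ (h a r, h a s) * u $ h a s)"
        proof (rule sum.cong[OF refl])
          fix r assume r: "r \<in> {..<n*dI i}"
          show "(\<Sum>a'<dJ j. \<Sum>s<n*dI i. cnj (u $ h a r) * Z (j,i) $$ (h a r, h a' s) * u $ h a' s)
            = (\<Sum>s<n*dI i. cnj (u $ h a r) * Z (j,i) $$ (h a r, h a s) * u $ h a s)"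
            using a r jiE by (subst sum_single[where A="{..<dJ j}" and a=a]) (auto simp: h_def Zent)
        qed
        also have "\<dots> = (\<Sum>r<n*dI i. \<Sum>s<n*dI i. complex_of_real (1 / real Dt) * (cnj (w a $ r) * X i $$ (r,s) * w a $ s))"
          using a jiE by (intro sum.cong refl) (simp add: h_def Zent w_def)
        also have "\<dots> = complex_of_real (1 / real Dt) * qf (n * dI i) (X i) (w a)"
          unfolding qf_def by (simp add: sum_distrib_left)
        finally show "(\<Sum>r<n*dI i. \<Sum>a'<dJ j. \<Sum>s<n*dI i. cnj (u $ h a r) * Z (j,i) $$ (h a r, h a' s) * u $ h a' s)
           = complex_of_real (1 / real Dt) * qf (n * dI i) (X i) (w a)" .
      qed
      finally have q: "qf (n * (dJ j * dI i)) (Z (j,i)) u = (\<Sum>a<dJ j. complex_of_real (1 / real Dt) * qf (n * dI i) (X i) (w a))" .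
      have "nn (qf (n * dI i) (X i) (w a))" for a
        using Xp[OF jiE(3)] unfolding psd_iff w_def by auto
      then show "nn (qf (n * (dJ j * dI i)) (Z (j,i)) u)" unfolding q
        by (intro nn_sum nn_scale) auto
    qed
  qed
  define ASZ where "ASZ = amplify n (J \<times> I) (hom_dim dI dJ) (L \<times> K) (hom_dim dK dL) S Z"
  have ASZpos: "mm_pos (L \<times> K) (\<lambda>lk. n * hom_dim dK dL lk) ASZ" unfolding ASZ_def by (rule S_cp[OF n Zpos])
  define W where "W p q = (\<lambda>ji. if ji \<in> J \<times> I then blk (hom_dim dI dJ ji) (Z ji) p q else 0\<^sub>m 0 0)" for p q
  define Xb where "Xb p q = (\<lambda>i. if i \<in> I then blk (dI i) (X i) p q else 0\<^sub>m 0 0)" for p q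
  have embW: "emb (Xb p q) = W p q" if "p < n" "q < n" for p q
  proof
    fix ji show "emb (Xb p q) ji = W p q ji"
    proof (cases "ji \<in> J \<times> I")
      case True
      then obtain j i where jiE: "ji = (j,i)" "j \<in> J" "i \<in> I" by auto
      have d: "dI i > 0" using dI_pos jiE by auto
      have ent: "emb (Xb p q) (j,i) $$ (r,s) = W p q (j,i) $$ (r,s)"
        if rs: "r < dJ j * dI i" "s < dJ j * dI i" for r s
      proof -
        have i1: "p * (dJ j * dI i) + r < n * (dJ j * dI i)" using hd_idx[OF rs(1) \<open>p < n\<close>] by simp
        have i2: "q * (dJ j * dI i) + s < n * (dJ j * dI i)" using hd_idx[OF rs(2) \<open>q < n\<close>] by simp
        have m1: "(p * (dJ j * dI i) + r) mod dI i = r mod dI i"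
          by (metis mod_mult_self3 mult.assoc mult.commute)
        have m2: "(q * (dJ j * dI i) + s) mod dI i = s mod dI i"
          by (metis mod_mult_self3 mult.assoc mult.commute)
        have r1: "r mod dI i < dI i" "s mod dI i < dI i" using d by auto
        have b1: "p * dI i + r mod dI i < n * dI i" using hd_idx[OF r1(1) \<open>p < n\<close>] by simp
        have b2: "q * dI i + s mod dI i < n * dI i" using hd_idx[OF r1(2) \<open>q < n\<close>] by simp
        have D0: "dJ j * dI i \<noteq> 0" using rs by (metis less_nat_zero_code)
        have v1: "(p * (dJ j * dI i) + r) div (dJ j * dI i) = p"
          unfolding div_mult_self3[OF D0] div_less[OF rs(1)] by simp
        have v2: "(q * (dJ j * dI i) + s) div (dJ j * dI i) = q"
          unfolding div_mult_self3[OF D0] div_less[OF rs(2)] by simp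
        show ?thesis using jiE rs i1 i2 m1 m2 r1 b1 b2
          by (simp add: emb_def W_def Xb_def blk_def Z_def v1 v2)
      qed
      show ?thesis unfolding jiE(1)
        apply (rule eq_matI)
          apply (rule ent)
        using jiE by (auto simp: emb_def W_def blk_def)
    next
      case False then show ?thesis by (simp add: emb_def W_def)
    qed
  qed
  show ?thesis unfolding mm_pos_def
  proof (intro conjI ballI)
    show "amplify n I dI K dK N X \<in> mm_carrier K (\<lambda>k. n * dK k)"
      unfolding mm_carrier_def amplify_def assemble_def by auto
    fix k assume k: "k \<in> K"
    have dk: "dK k > 0" using vK k unfolding valid_mm_def by auto
    define g where "g l c r = (r div dK k)*(dL l * dK k) + c * dK k + r mod dK k" for l c r
    have ANent: "amplify n I dI K dK N X k $$ (r,s) = (\<Sum>l\<in>L. \<Sum>c<dL l. ASZ (l,k) $$ (g l c r, g l c s))"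
      if rs: "r < n * dK k" "s < n * dK k" for r s
    proof -
      have p: "r div dK k < n" "s div dK k < n" using rs dk by (auto simp: div_less_iff_less_mult mult.commute)
      have md: "r mod dK k < dK k" "s mod dK k < dK k" using dk by auto
      have "amplify n I dI K dK N X k $$ (r,s) = N (Xb (r div dK k) (s div dK k)) k $$ (r mod dK k, s mod dK k)"
        using k rs by (simp add: amplify_def assemble_def Xb_def)
      also have "\<dots> = tr_out K dK L dL (S (W (r div dK k) (s div dK k))) k $$ (r mod dK k, s mod dK k)"
        unfolding N_def embW[OF p] ..
      also have "\<dots> = (\<Sum>l\<in>L. \<Sum>c<dL l. S (W (r div dK k) (s div dK k)) (l,k) $$ (c * dK k + r mod dK k, c * dK k + s mod dK k))"
        using k md by (simp add: tr_out_def)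
      also have "\<dots> = (\<Sum>l\<in>L. \<Sum>c<dL l. ASZ (l,k) $$ (g l c r, g l c s))"
      proof (intro sum.cong refl)
        fix l c assume l: "l \<in> L" and c: "c \<in> {..<dL l}"
        have c': "c < dL l" using c by simp
        note f = idx3[OF rs(1) c'] and f2 = idx3[OF rs(2) c']
        show "S (W (r div dK k) (s div dK k)) (l,k) $$ (c * dK k + r mod dK k, c * dK k + s mod dK k) = ASZ (l,k) $$ (g l c r, g l c s)"
        proof -
          have lk: "(l,k) \<in> L \<times> K" using l k by simp
          have "ASZ (l,k) $$ (g l c r, g l c s) = S (\<lambda>ji. if ji \<in> J \<times> I then blk (hom_dim dI dJ ji) (Z ji)
              (g l c r div hom_dim dK dL (l,k)) (g l c s div hom_dim dK dL (l,k)) else 0\<^sub>m 0 0) (l,k)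
              $$ (g l c r mod hom_dim dK dL (l,k), g l c s mod hom_dim dK dL (l,k))"
            unfolding ASZ_def g_def hd_simp by (rule amp_ent[OF lk, where n=n and e="hom_dim dK dL", unfolded hd_simp]) (rule f(5), rule f2(5))
          also have "\<dots> = S (W (r div dK k) (s div dK k)) (l,k) $$ (c * dK k + r mod dK k, c * dK k + s mod dK k)"
            unfolding hd_simp g_def f(1) f2(1) f(2) f2(2) W_def ..
          finally show ?thesis by simp
        qed
      qed
      finally show ?thesis .
    qed
    show "psd_mat (n * dK k) (amplify n I dI K dK N X k)"
      unfolding psd_iff
    proof (intro conjI ballI)
      show "amplify n I dI K dK N X k \<in> carrier_mat (n * dK k) (n * dK k)"
        using k by (simp add: amplify_def assemble_def)
      fix v :: "complex vec" assume v: "v \<in> carrier_vec (n * dK k)"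
      define u where "u l c = vec (n*(dL l*dK k)) (\<lambda>t. if (t mod (dL l*dK k)) div dK k = c then v $ ((t div (dL l*dK k))*dK k + t mod dK k) else 0)" for l c
      have "qf (n * dK k) (amplify n I dI K dK N X k) v =
          (\<Sum>r<n * dK k. \<Sum>s<n * dK k. cnj (v$r) * (\<Sum>l\<in>L. \<Sum>c<dL l. ASZ (l,k) $$ (g l c r, g l c s)) * v$s)"
        unfolding qf_def by (intro sum.cong refl) (simp add: ANent)
      also have "\<dots> = (\<Sum>r<n * dK k. \<Sum>s<n * dK k. \<Sum>l\<in>L. \<Sum>c<dL l. cnj (v$r) * ASZ (l,k) $$ (g l c r, g l c s) * v$s)"
        by (simp add: sum_distrib_left sum_distrib_right)
      also have "\<dots> = (\<Sum>l\<in>L. \<Sum>c<dL l. \<Sum>r<n * dK k. \<Sum>s<n * dK k. cnj (v$r) * ASZ (l,k) $$ (g l c r, g l c s) * v$s)"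
        by (simp only: sum.swap[of _ L] sum.swap[of _ "{..<dL _}"])
      also have "\<dots> = (\<Sum>l\<in>L. \<Sum>c<dL l. qf (n*(dL l*dK k)) (ASZ (l,k)) (u l c))"
        unfolding u_def g_def by (intro sum.cong refl) (simp add: qf_pull)
      finally have q: "qf (n * dK k) (amplify n I dI K dK N X k) v = (\<Sum>l\<in>L. \<Sum>c<dL l. qf (n*(dL l*dK k)) (ASZ (l,k)) (u l c))" .
      have "nn (qf (n*(dL l*dK k)) (ASZ (l,k)) (u l c))" if "l \<in> L" for l c
      proof -
        have "psd_mat (n * hom_dim dK dL (l,k)) (ASZ (l,k))" using ASZpos that k unfolding mm_pos_def by auto
        then show ?thesis unfolding psd_iff u_def by simp
      qed
      then show "nn (qf (n * dK k) (amplify n I dI K dK N X k) v)" unfolding q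
        by (intro nn_sum) auto
    qed
  qed
qed

lemma N_cp: "mm_cp I dI K dK N"
  unfolding mm_cp_def using N_lin N_cp_pos by auto

end

theorem lemma3p4:
  fixes I :: "'i set" and J :: "'j set" and K :: "'k set" and L :: "'l set"
    and dI :: "'i \<Rightarrow> nat" and dJ :: "'j \<Rightarrow> nat" and dK :: "'k \<Rightarrow> nat" and dL :: "'l \<Rightarrow> nat"
    and S :: "('j \<times> 'i \<Rightarrow> complex mat) \<Rightarrow> ('l \<times> 'k \<Rightarrow> complex mat)"
  assumes "valid_mm I dI" and "valid_mm J dJ" and "valid_mm K dK" and "valid_mm L dL"
    and "deterministic_supermap I dI J dJ K dK L dL S"
  shows "\<exists>N. mm_cp I dI K dK N \<and> N (mm_one I dI) = mm_one K dK \<and>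
           (\<forall>X. mm_pos (J \<times> I) (hom_dim dI dJ) X \<longrightarrow>
                tr_out K dK L dL (S X) = N (tr_out I dI J dJ X))"
proof -
  interpret setting I J K L dI dJ dK dL S using assms by unfold_locales
  show ?thesis using N_cp N_unital main_eq by blast
qed

end
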